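(* Let $\mathsf P$ be a network coding problem. A rate-capacity tuple $(\lambda,\omega)$ is $0$-achievable subject to a routing constraint if and only if \[(\lambda,\omega)\in\mathsf{CL}\big(\mathrm{proj}_{\mathsf P}[\Gamma_{AA}\cap\mathcal C_T(\mathsf P)\cap\mathcal C_D(\mathsf P)\cap\mathcal C_I(\mathsf P)]\big).\]
   Context: A network is $\mathsf G=(\mathcal V,\mathcal E)$, $\mathcal V$ a finite set of nodes, $\mathcal E$ a finite set of hyperedges, each $e$ with tail $\mathrm{tail}(e)\in\mathcal V$ and head $\mathrm{head}(e)\subseteq\mathcal V$, without directed cycles. A connection constraint $\mathsf M=(\mathcal S,O,D)$: finite source index set $\mathcal S$, $O:\mathcal S\to2^{\mathcal V}$ (where source $s$ is available), $D:\mathcal S\to2^{\mathcal V}$ (sinks of $s$). $\mathsf P=(\mathsf G,\mathsf M)$. Sources are imaginary edges with $\mathrm{head}(s)=O(s)$; $\mathrm{in}(e)=\{f\in\mathcal S\cup\mathcal E:\mathrm{tail}(e)\in\mathrm{head}(f)\}$ for $e\in\mathcal E$, $\mathrm{in}(u)=\{f\in\mathcal S\cup\mathcal E:u\in\mathrm{head}(f)\}$ for $u\in\mathcal V$. A rate-capacity tuple is $(\lambda,\omega)$, $\lambda:\mathcal S\to\mathbb R_{\ge0}$, $\omega:\mathcal E\to\mathbb R_{\ge0}$. A routing subnetwork is a subset $\mathcal T\subseteq\mathcal S\cup\mathcal E$ with $|\mathcal T\cap\mathcal S|=1$ (the unique source in it is denoted $\nu(\mathcal T)$) such that $\mathrm{in}(e)\cap\mathcal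 T\ne\emptyset$ for every $e\in\mathcal T\cap\mathcal E$. A tuple $(\lambda,\omega)$ is $0$-achievable subject to a routing constraint if there is a (finite) collection of routing subnetworks $\mathcal T_i$ with capacities $c_i\ge0$ such that: (R1) $\omega(e)\ge\sum_{i:e\in\mathcal T_i}c_i$ for every $e\in\mathcal E$; (R2) for every $i$ and every $u\in D(\nu(\mathcal T_i))$ there is $e\in\mathcal T_i$ with $u\in\mathrm{head}(e)$; (R3) $\lambda(s)=\sum_{i:\nu(\mathcal T_i)=s}c_i$ for every $s\in\mathcal S$. $\mathcal H[\mathcal S\cup\mathcal E]$ is the set of real functions on subsets of $\mathcal S\cup\mathcal E$; $g(\alpha\mid\beta)=g(\alpha\cup\beta)-g(\beta)$. A function $h$ is atomic if there is $\mathcal T\subseteq\mathcal S\cup\mathcal E$ with $h(\beta)=1$ when $\beta\cap\mathcal T\neq\emptyset$ and $h(\beta)=0$ otherwise; it is almost atomic if $h=\sum_ic_ih^i$ (finite sum) with $c_i\ge0$ and each $h^i$ atomic. $\Gamma_{AA}$ is the set of almost atomic functions. $\mathcal C_I(\mathsf P)=\{h:h(\mathcal S)=\sum_sh(s)\}$, $\mathcal C_T(\mathsf P)=\{h:h(e\mid\mathrm{in}(e))=0\ \forall e\in\mathcal E\}$, $\mathcal C_D(\mathsf P)=\{h:h(s\mid\mathrm{in}(u))=0\ \forall s,u\in D(s)\}$. $\mathrm{proj}_{\mathsf P}[h]=(h(s),s\in\mathcal S;h(e),e\in\mathcal E)$, applied elementwise to sets. For a set $\mathcal R$ of tuples, $\mathsf{CL}(\mathcal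 R)$ is the set of $(\lambda,\omega)$ such that there exist $(\lambda^n,\omega^n)\in\mathcal R$ and $c_n>0$ with $\lim_nc_n\omega^n(e)\le\omega(e)$ and $\lim_nc_n\lambda^n(s)\ge\lambda(s)$ for all $e,s$. *)

theory Defs
  imports "HOL-Analysis.Analysis"
begin

text \<open>The ground set S \<union> E is represented inside
the sum type 's + 'e as Inl ` S \<union> Inr ` E.\<close>

definition ground :: "'s set \<Rightarrow> 'e set \<Rightarrow> ('s + 'e) set" where
  "ground S E = Inl ` S \<union> Inr ` E"

text \<open>Head of a source (imaginary edge) is Orig(s), head of an edge is head(e).\<close>
definition headX :: "('s \<Rightarrow> 'v set) \<Rightarrow> ('e \<Rightarrow> 'v set) \<Rightarrow> ('s + 'e) \<Rightarrow> 'v set" where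
  "headX Orig headf f = (case f of Inl s \<Rightarrow> Orig s | Inr e \<Rightarrow> headf e)"

definition network_problem ::
  "'v set \<Rightarrow> 'e set \<Rightarrow> ('e \<Rightarrow> 'v) \<Rightarrow> ('e \<Rightarrow> 'v set) \<Rightarrow>
   's set \<Rightarrow> ('s \<Rightarrow> 'v set) \<Rightarrow> ('s \<Rightarrow> 'v set) \<Rightarrow> bool" where
  "network_problem V E tailf headf S Orig D \<longleftrightarrow>
     finite V \<and> finite E \<and> finite S \<and>
     (\<forall>e\<in>E. tailf e \<in> V \<and> headf e \<subseteq> V) \<and>
     (\<forall>s\<in>S. Orig s \<subseteq> V \<and> D s \<subseteq> V) \<and>
     acyclic {(tailf e, v) | e v. e \<in> E \<and> v \<in> headf e}"

definition in_node :: "'s set \<Rightarrow> 'e set \<Rightarrow> ('s \<Rightarrow> 'v set) \<Rightarrow> ('e \<Rightarrow> 'v set)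
    \<Rightarrow> 'v \<Rightarrow> ('s + 'e) set" where
  "in_node S E Orig headf u = {f \<in> ground S E. u \<in> headX Orig headf f}"

definition in_edge :: "'s set \<Rightarrow> 'e set \<Rightarrow> ('s \<Rightarrow> 'v set) \<Rightarrow> ('e \<Rightarrow> 'v)
    \<Rightarrow> ('e \<Rightarrow> 'v set) \<Rightarrow> 'e \<Rightarrow> ('s + 'e) set" where
  "in_edge S E Orig tailf headf e = in_node S E Orig headf (tailf e)"

definition routing_subnetwork ::
  "'s set \<Rightarrow> 'e set \<Rightarrow> ('e \<Rightarrow> 'v) \<Rightarrow> ('e \<Rightarrow> 'v set) \<Rightarrow> ('s \<Rightarrow> 'v set)
   \<Rightarrow> ('s + 'e) set \<Rightarrow> bool" where
  "routing_subnetwork S E tailf headf Orig T \<longleftrightarrow>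
     T \<subseteq> ground S E \<and> card (T \<inter> Inl ` S) = 1 \<and>
     (\<forall>e\<in>E. Inr e \<in> T \<longrightarrow> in_edge S E Orig tailf headf e \<inter> T \<noteq> {})"

definition nu :: "('s + 'e) set \<Rightarrow> 's" where
  "nu T = (THE s. Inl s \<in> T)"

definition zero_achievable_routing ::
  "'v set \<Rightarrow> 'e set \<Rightarrow> ('e \<Rightarrow> 'v) \<Rightarrow> ('e \<Rightarrow> 'v set) \<Rightarrow>
   's set \<Rightarrow> ('s \<Rightarrow> 'v set) \<Rightarrow> ('s \<Rightarrow> 'v set) \<Rightarrow>
   ('s \<Rightarrow> real) \<Rightarrow> ('e \<Rightarrow> real) \<Rightarrow> bool" where
  "zero_achievable_routing V E tailf headf S Orig D lam om \<longleftrightarrow>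
     (\<exists>(n::nat) (T :: nat \<Rightarrow> ('s + 'e) set) (c :: nat \<Rightarrow> real).
        (\<forall>i<n. routing_subnetwork S E tailf headf Orig (T i) \<and> c i \<ge> 0) \<and>
        (\<forall>e\<in>E. om e \<ge> (\<Sum>i\<in>{i. i < n \<and> Inr e \<in> T i}. c i)) \<and>
        (\<forall>i<n. \<forall>u\<in>D (nu (T i)). \<exists>f\<in>T i. u \<in> headX Orig headf f) \<and>
        (\<forall>s\<in>S. lam s = (\<Sum>i\<in>{i. i < n \<and> nu (T i) = s}. c i)))"

text \<open>Functions h :: ('s+'e) set \<Rightarrow> real; only values on subsets of X matter.\<close>

definition atomic_on :: "('a) set \<Rightarrow> ('a set \<Rightarrow> real) \<Rightarrow> bool" where
  "atomic_on X h \<longleftrightarrow> (\<exists>T\<subseteq>X. \<forall>\<beta>\<subseteq>X. h \<beta> = (if \<beta> \<inter> T \<noteq> {} then 1 else 0))"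

definition almost_atomic_on :: "('a) set \<Rightarrow> ('a set \<Rightarrow> real) \<Rightarrow> bool" where
  "almost_atomic_on X h \<longleftrightarrow>
     (\<exists>(n::nat) (c :: nat \<Rightarrow> real) (hs :: nat \<Rightarrow> 'a set \<Rightarrow> real).
        (\<forall>i<n. c i \<ge> 0 \<and> atomic_on X (hs i)) \<and>
        (\<forall>\<beta>\<subseteq>X. h \<beta> = (\<Sum>i<n. c i * hs i \<beta>)))"

definition cond_diff :: "('a set \<Rightarrow> real) \<Rightarrow> 'a set \<Rightarrow> 'a set \<Rightarrow> real" where
  "cond_diff g \<alpha> \<beta> = g (\<alpha> \<union> \<beta>) - g \<beta>"

definition C_I :: "'s set \<Rightarrow> 'e set \<Rightarrow> (('s + 'e) set \<Rightarrow> real) \<Rightarrow> bool" where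
  "C_I S E h \<longleftrightarrow> h (Inl ` S) = (\<Sum>s\<in>S. h {Inl s})"

definition C_T :: "'s set \<Rightarrow> 'e set \<Rightarrow> ('e \<Rightarrow> 'v) \<Rightarrow> ('e \<Rightarrow> 'v set) \<Rightarrow>
    ('s \<Rightarrow> 'v set) \<Rightarrow> (('s + 'e) set \<Rightarrow> real) \<Rightarrow> bool" where
  "C_T S E tailf headf Orig h \<longleftrightarrow> (\<forall>e\<in>E. cond_diff h {Inr e} (in_edge S E Orig tailf headf e) = 0)"

definition C_D :: "'s set \<Rightarrow> 'e set \<Rightarrow> ('e \<Rightarrow> 'v set) \<Rightarrow>
    ('s \<Rightarrow> 'v set) \<Rightarrow> ('s \<Rightarrow> 'v set) \<Rightarrow> (('s + 'e) set \<Rightarrow> real) \<Rightarrow> bool" where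
  "C_D S E headf Orig D h \<longleftrightarrow>
     (\<forall>s\<in>S. \<forall>u\<in>D s. cond_diff h {Inl s} (in_node S E Orig headf u) = 0)"

definition proj :: "(('s + 'e) set \<Rightarrow> real) \<Rightarrow> ('s \<Rightarrow> real) \<times> ('e \<Rightarrow> real)" where
  "proj h = ((\<lambda>s. h {Inl s}), (\<lambda>e. h {Inr e}))"

text \<open>The closure operator CL (limits are required to exist).\<close>
definition CL :: "'s set \<Rightarrow> 'e set \<Rightarrow> (('s \<Rightarrow> real) \<times> ('e \<Rightarrow> real)) set
    \<Rightarrow> (('s \<Rightarrow> real) \<times> ('e \<Rightarrow> real)) set" where
  "CL S E R = {(lam, om). \<exists>(seq :: nat \<Rightarrow> ('s \<Rightarrow> real) \<times> ('e \<Rightarrow> real)) (c :: nat \<Rightarrow> real).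
      (\<forall>n. seq n \<in> R \<and> c n > 0) \<and>
      (\<forall>e\<in>E. \<exists>L. (\<lambda>n. c n * snd (seq n) e) \<longlonglongrightarrow> L \<and> L \<le> om e) \<and>
      (\<forall>s\<in>S. \<exists>L. (\<lambda>n. c n * fst (seq n) s) \<longlonglongrightarrow> L \<and> L \<ge> lam s)}"

end

theory Submission
  imports Defs
begin


definition ind :: "'a set \<Rightarrow> 'a set \<Rightarrow> real" where
  "ind T \<beta> = (if \<beta> \<inter> T \<noteq> {} then 1 else 0)"

lemma ind_mono: "A \<subseteq> B \<Longrightarrow> ind T A \<le> ind T B"
  by (auto simp: ind_def)

lemma ind_single[simp]: "ind T {x} = (if x \<in> T then 1 else 0)"
  by (auto simp: ind_def)

lemma nu_props:
  assumes "routing_subnetwork S E tailf headf Orig T"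
  shows "nu T \<in> S" "Inl (nu T) \<in> T" "\<And>s. Inl s \<in> T \<Longrightarrow> s = nu T"
proof -
  from assms have c: "card (T \<inter> Inl ` S) = 1" and sub: "T \<subseteq> ground S E"
    by (auto simp: routing_subnetwork_def)
  from c obtain x where x: "T \<inter> Inl ` S = {x}" using card_1_singletonE by blast
  then obtain s0 where s0: "s0 \<in> S" "x = Inl s0" by auto
  have eq: "Inl s \<in> T \<longleftrightarrow> s = s0" for s
  proof
    assume "Inl s \<in> T"
    with sub have "s \<in> S" by (auto simp: ground_def)
    with \<open>Inl s \<in> T\<close> x s0 show "s = s0" by auto
  next
    assume "s = s0" with x s0 show "Inl s \<in> T" by auto
  qed
  have nu: "nu T = s0" unfolding nu_def using eq by auto
  show "nu T \<in> S" "Inl (nu T) \<in> T" "\<And>s. Inl s \<in> T \<Longrightarrow> s = nu T"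
    using nu eq s0 by auto
qed

lemma pos_zero:
  fixes c g :: "nat \<Rightarrow> real"
  assumes "\<forall>i<m. c i \<ge> 0" "\<forall>i<m. g i \<ge> 0" "(\<Sum>i<m. c i * g i) = 0" "i < m" "c i > 0"
  shows "g i = 0"
proof -
  have "\<forall>i\<in>{..<m}. c i * g i = 0"
    using assms(3) sum_nonneg_eq_0_iff[of "{..<m}" "\<lambda>i. c i * g i"] assms(1,2) by auto
  with assms(4,5) show ?thesis by force
qed

lemma reindex_bij:
  fixes N :: nat
  assumes "bij_betw g {0..<N} K"
  shows "(\<Sum>i\<in>{i. i < N \<and> P (g i)}. f (g i)) = (\<Sum>T\<in>{T\<in>K. P T}. f T)"
proof -
  have im: "g ` {0..<N} = K" using assms by (simp add: bij_betw_def)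
  have gK: "g i \<in> K" if "i < N" for i using that im[symmetric] by simp
  have "g ` {i. i < N \<and> P (g i)} = {T\<in>K. P T}"
  proof
    show "g ` {i. i < N \<and> P (g i)} \<subseteq> {T\<in>K. P T}" using gK by auto
    show "{T\<in>K. P T} \<subseteq> g ` {i. i < N \<and> P (g i)}"
    proof
      fix T assume "T \<in> {T\<in>K. P T}"
      then obtain i where "i < N" "T = g i" "P T" using im by force
      then show "T \<in> g ` {i. i < N \<and> P (g i)}" by auto
    qed
  qed
  moreover have "inj_on g {i. i < N \<and> P (g i)}"
  proof -
    have "inj_on g {0..<N}" using assms by (simp add: bij_betw_def)
    then show ?thesis by (rule inj_on_subset) auto
  qed
  ultimately show ?thesis using sum.reindex[of g "{i. i < N \<and> P (g i)}" f] by simp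
qed



definition Kset where
  "Kset S E tailf headf Orig D = {T. routing_subnetwork S E tailf headf Orig T \<and>
      (\<forall>u\<in>D (nu T). \<exists>f\<in>T. u \<in> headX Orig headf f)}"

lemma Kset_finite:
  assumes "finite S" "finite E"
  shows "finite (Kset S E tailf headf Orig D)"
proof -
  have "Kset S E tailf headf Orig D \<subseteq> Pow (ground S E)"
    by (auto simp: Kset_def routing_subnetwork_def)
  moreover have "finite (ground S E)" using assms by (simp add: ground_def)
  ultimately show ?thesis by (meson finite_Pow_iff finite_subset)
qed

lemma in_node_sub: "in_node S E Orig headf u \<subseteq> ground S E"
  by (auto simp: in_node_def)

lemma L1:
  fixes h :: "('s + 'e) set \<Rightarrow> real" and S :: "'s set" and E :: "'e set"
  assumes finS: "finite S" and finE: "finite E"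
    and aa: "almost_atomic_on (ground S E) h"
    and CT: "C_T S E tailf headf Orig h" and CD: "C_D S E headf Orig D h" and CI: "C_I S E h"
  shows "\<exists>w. (\<forall>T. w T \<ge> 0) \<and>
     (\<forall>s\<in>S. h {Inl s} = (\<Sum>T\<in>{T\<in>Kset S E tailf headf Orig D. nu T = s}. w T)) \<and>
     (\<forall>e\<in>E. h {Inr e} \<ge> (\<Sum>T\<in>{T\<in>Kset S E tailf headf Orig D. Inr e \<in> T}. w T))"
proof -
  define X where "X = ground S E"
  define K where "K = Kset S E tailf headf Orig D"
  have finK: "finite K" unfolding K_def using Kset_finite finS finE by blast
  have "\<exists>(m::nat) (c :: nat \<Rightarrow> real) (hs :: nat \<Rightarrow> ('s + 'e) set \<Rightarrow> real).
        (\<forall>i<m. c i \<ge> 0 \<and> atomic_on X (hs i)) \<and>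
        (\<forall>\<beta>\<subseteq>X. h \<beta> = (\<Sum>i<m. c i * hs i \<beta>))"
    using aa unfolding almost_atomic_on_def X_def .
  then obtain m :: nat and c hs where c: "\<forall>i<m. c i \<ge> 0 \<and> atomic_on X (hs i)"
    and hsum: "\<forall>\<beta>\<subseteq>X. h \<beta> = (\<Sum>i<m. c i * hs i \<beta>)"
    by (elim exE conjE) (rule that)
  have "\<forall>i. \<exists>T. i < m \<longrightarrow> T \<subseteq> X \<and> (\<forall>\<beta>\<subseteq>X. hs i \<beta> = ind T \<beta>)"
  proof
    fix i show "\<exists>T. i < m \<longrightarrow> T \<subseteq> X \<and> (\<forall>\<beta>\<subseteq>X. hs i \<beta> = ind T \<beta>)"
    proof (cases "i < m")
      case True
      then have "atomic_on X (hs i)" using c by blast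
      then obtain T where "T \<subseteq> X" "\<forall>\<beta>\<subseteq>X. hs i \<beta> = (if \<beta> \<inter> T \<noteq> {} then 1 else 0)"
        unfolding atomic_on_def by blast
      then show ?thesis by (intro exI[of _ T]) (simp add: ind_def)
    qed simp
  qed
  from choice[OF this] obtain Tt where Tt0: "\<forall>i. i < m \<longrightarrow> Tt i \<subseteq> X \<and> (\<forall>\<beta>\<subseteq>X. hs i \<beta> = ind (Tt i) \<beta>)"
    by blast
  have Tt: "Tt i \<subseteq> X \<and> (\<forall>\<beta>\<subseteq>X. hs i \<beta> = ind (Tt i) \<beta>)" if "i < m" for i
    using Tt0 that by blast
  have hX: "h \<beta> = (\<Sum>i<m. c i * ind (Tt i) \<beta>)" if "\<beta> \<subseteq> X" for \<beta>
  proof -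
    have "h \<beta> = (\<Sum>i<m. c i * hs i \<beta>)" using hsum that by blast
    also have "\<dots> = (\<Sum>i<m. c i * ind (Tt i) \<beta>)"
      by (rule sum.cong[OF refl]) (use Tt that in auto)
    finally show ?thesis .
  qed
  have c0: "\<forall>i<m. c i \<ge> 0" using c by auto
  have cd: "cond_diff h A B = (\<Sum>i<m. c i * (ind (Tt i) (A \<union> B) - ind (Tt i) B))"
    if "A \<subseteq> X" "B \<subseteq> X" for A B
    using that by (simp add: cond_diff_def hX sum_subtractf right_diff_distrib)
  have P1: "in_edge S E Orig tailf headf e \<inter> Tt i \<noteq> {}"
    if "i < m" "c i > 0" "e \<in> E" "Inr e \<in> Tt i" for i e
  proof -
    let ?B = "in_edge S E Orig tailf headf e"
    have B: "?B \<subseteq> X" by (simp add: X_def in_edge_def in_node_sub)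
    have A: "{Inr e} \<subseteq> X" using that by (simp add: X_def ground_def)
    have "(\<Sum>i<m. c i * (ind (Tt i) ({Inr e} \<union> ?B) - ind (Tt i) ?B)) = 0"
      using CT that cd[OF A B] by (simp add: C_T_def)
    moreover have "\<forall>i<m. ind (Tt i) ({Inr e} \<union> ?B) - ind (Tt i) ?B \<ge> 0"
      by (auto intro: ind_mono simp: algebra_simps)
    ultimately have "ind (Tt i) ({Inr e} \<union> ?B) - ind (Tt i) ?B = 0"
      using pos_zero[of m c "\<lambda>i. ind (Tt i) ({Inr e} \<union> ?B) - ind (Tt i) ?B" i] c0 that(1,2) by simp
    then show ?thesis using that(4) by (auto simp: ind_def split: if_splits)
  qed
  have P2: "in_node S E Orig headf u \<inter> Tt i \<noteq> {}"
    if "i < m" "c i > 0" "s \<in> S" "u \<in> D s" "Inl s \<in> Tt i" for i s u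
  proof -
    let ?B = "in_node S E Orig headf u"
    have B: "?B \<subseteq> X" by (simp add: X_def in_node_sub)
    have A: "{Inl s} \<subseteq> X" using that by (simp add: X_def ground_def)
    have "(\<Sum>i<m. c i * (ind (Tt i) ({Inl s} \<union> ?B) - ind (Tt i) ?B)) = 0"
      using CD that cd[OF A B] by (simp add: C_D_def)
    moreover have "\<forall>i<m. ind (Tt i) ({Inl s} \<union> ?B) - ind (Tt i) ?B \<ge> 0"
      by (auto intro: ind_mono simp: algebra_simps)
    ultimately have "ind (Tt i) ({Inl s} \<union> ?B) - ind (Tt i) ?B = 0"
      using pos_zero[of m c "\<lambda>i. ind (Tt i) ({Inl s} \<union> ?B) - ind (Tt i) ?B" i] c0 that(1,2) by simp
    then show ?thesis using that(5) by (auto simp: ind_def split: if_splits)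
  qed
  define g where "g i = (\<Sum>s\<in>S. ind (Tt i) {Inl s}) - ind (Tt i) (Inl ` S)" for i
  have g0: "g i \<ge> 0" for i
  proof (cases "Inl ` S \<inter> Tt i = {}")
    case True then show ?thesis by (simp add: g_def ind_def sum_nonneg)
  next
    case False
    then obtain s0 where s0: "s0 \<in> S" "Inl s0 \<in> Tt i" by auto
    have "ind (Tt i) {Inl s0} \<le> (\<Sum>s\<in>S. ind (Tt i) {Inl s})"
      by (rule member_le_sum[OF s0(1)]) (auto simp: finS)
    then show ?thesis using s0 by (simp add: g_def ind_def)
  qed
  have SX: "Inl ` S \<subseteq> X" by (auto simp: X_def ground_def)
  have singX: "{Inl s} \<subseteq> X" if "s \<in> S" for s using that by (auto simp: X_def ground_def)
  have "(\<Sum>i<m. c i * g i) = (\<Sum>s\<in>S. h {Inl s}) - h (Inl ` S)"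
  proof -
    have "(\<Sum>s\<in>S. h {Inl s}) = (\<Sum>s\<in>S. \<Sum>i<m. c i * ind (Tt i) {Inl s})"
      using singX hX by (intro sum.cong) auto
    also have "\<dots> = (\<Sum>i<m. c i * (\<Sum>s\<in>S. ind (Tt i) {Inl s}))"
      by (subst sum.swap) (simp add: sum_distrib_left)
    finally show ?thesis using hX[OF SX]
      by (simp add: g_def right_diff_distrib sum_subtractf)
  qed
  then have gsum: "(\<Sum>i<m. c i * g i) = 0" using CI by (simp add: C_I_def)
  have P3: "s1 = s2"
    if "i < m" "c i > 0" "s1 \<in> S" "s2 \<in> S" "Inl s1 \<in> Tt i" "Inl s2 \<in> Tt i" for i s1 s2
  proof (rule ccontr)
    assume ne: "s1 \<noteq> s2"
    have "g i = 0" using pos_zero[of m c g i] c0 gsum that(1,2) g0 by auto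
    have "(\<Sum>s\<in>{s1,s2}. ind (Tt i) {Inl s}) \<le> (\<Sum>s\<in>S. ind (Tt i) {Inl s})"
      by (rule sum_mono2) (use finS that in auto)
    moreover have "(\<Sum>s\<in>{s1,s2}. ind (Tt i) {Inl s}) = 2" using ne that by simp
    moreover have "ind (Tt i) (Inl ` S) \<le> 1" by (simp add: ind_def)
    ultimately have "g i \<ge> 1" by (simp add: g_def)
    with \<open>g i = 0\<close> show False by simp
  qed
  have F: "Tt i \<in> K \<and> nu (Tt i) = s"
    if "i < m" "c i > 0" "s \<in> S" "Inl s \<in> Tt i" for i s
  proof -
    have sub: "Tt i \<subseteq> ground S E" using Tt that(1) by (simp add: X_def)
    have "Tt i \<inter> Inl ` S = {Inl s}"
    proof
      show "Tt i \<inter> Inl ` S \<subseteq> {Inl s}"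
      proof
        fix x assume x: "x \<in> Tt i \<inter> Inl ` S"
        then obtain s' where s': "s' \<in> S" "x = Inl s'" by blast
        then have "Inl s' \<in> Tt i" using x by blast
        then have "s' = s" using P3[of i s' s] that s'(1) by blast
        then show "x \<in> {Inl s}" using s' by blast
      qed
      show "{Inl s} \<subseteq> Tt i \<inter> Inl ` S" using that by blast
    qed
    then have "card (Tt i \<inter> Inl ` S) = 1" by simp
    moreover have "\<forall>e\<in>E. Inr e \<in> Tt i \<longrightarrow> in_edge S E Orig tailf headf e \<inter> Tt i \<noteq> {}"
      using P1[OF that(1,2)] by blast
    ultimately have rs: "routing_subnetwork S E tailf headf Orig (Tt i)"
      unfolding routing_subnetwork_def using sub by blast
    have nus: "nu (Tt i) = s" using nu_props(3)[OF rs that(4)] by simp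
    have "\<forall>u\<in>D (nu (Tt i)). \<exists>f\<in>Tt i. u \<in> headX Orig headf f"
    proof
      fix u assume "u \<in> D (nu (Tt i))"
      then have "in_node S E Orig headf u \<inter> Tt i \<noteq> {}" using P2[OF that(1,2,3) _ that(4)] nus by simp
      then show "\<exists>f\<in>Tt i. u \<in> headX Orig headf f" unfolding in_node_def by blast
    qed
    then show ?thesis using rs nus unfolding K_def Kset_def by blast
  qed
  have G: "Inl (nu T) \<in> T" "nu T \<in> S" if "T \<in> K" for T
  proof -
    have "routing_subnetwork S E tailf headf Orig T" using that unfolding K_def Kset_def by blast
    then show "Inl (nu T) \<in> T" "nu T \<in> S" using nu_props by blast+
  qed
  define w where "w T = (\<Sum>i<m. if Tt i = T \<and> T \<in> K then c i else 0)" for T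
  have wsum: "(\<Sum>T\<in>{T\<in>K. P T}. w T) = (\<Sum>i<m. if Tt i \<in> K \<and> P (Tt i) then c i else 0)" for P
  proof -
    have "(\<Sum>T\<in>{T\<in>K. P T}. w T) = (\<Sum>i<m. \<Sum>T\<in>{T\<in>K. P T}. if Tt i = T \<and> T \<in> K then c i else 0)"
      unfolding w_def by (rule sum.swap)
    also have "\<dots> = (\<Sum>i<m. if Tt i \<in> K \<and> P (Tt i) then c i else 0)"
    proof (rule sum.cong[OF refl])
      fix i
      have "(\<Sum>T\<in>{T\<in>K. P T}. if Tt i = T \<and> T \<in> K then c i else 0)
          = (\<Sum>T\<in>{T\<in>K. P T}. if Tt i = T then c i else 0)" by (rule sum.cong) auto
      also have "\<dots> = (if Tt i \<in> {T\<in>K. P T} then c i else 0)"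
        using finK by (simp add: sum.delta)
      finally show "(\<Sum>T\<in>{T\<in>K. P T}. if Tt i = T \<and> T \<in> K then c i else 0) =
          (if Tt i \<in> K \<and> P (Tt i) then c i else 0)" by simp
    qed
    finally show ?thesis .
  qed
  have w0: "w T \<ge> 0" for T unfolding w_def using c0 by (auto intro: sum_nonneg)
  have src: "h {Inl s} = (\<Sum>T\<in>{T\<in>K. nu T = s}. w T)" if "s \<in> S" for s
  proof -
    have "h {Inl s} = (\<Sum>i<m. c i * ind (Tt i) {Inl s})" using hX singX that by auto
    also have "\<dots> = (\<Sum>i<m. if Tt i \<in> K \<and> nu (Tt i) = s then c i else 0)"
    proof (rule sum.cong[OF refl])
      fix i assume i: "i \<in> {..<m}"
      show "c i * ind (Tt i) {Inl s} = (if Tt i \<in> K \<and> nu (Tt i) = s then c i else 0)"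
      proof (cases "c i > 0")
        case True
        then show ?thesis using F[OF _ True that] G[of "Tt i"] i by auto
      next
        case False then have "c i = 0" using c0 i by force
        then show ?thesis by simp
      qed
    qed
    finally show ?thesis using wsum by simp
  qed
  have edg: "h {Inr e} \<ge> (\<Sum>T\<in>{T\<in>K. Inr e \<in> T}. w T)" if "e \<in> E" for e
  proof -
    have "{Inr e} \<subseteq> X" using that by (auto simp: X_def ground_def)
    then have "h {Inr e} = (\<Sum>i<m. c i * ind (Tt i) {Inr e})" using hX by auto
    moreover have "(\<Sum>i<m. if Tt i \<in> K \<and> Inr e \<in> Tt i then c i else 0) \<le> (\<Sum>i<m. c i * ind (Tt i) {Inr e})"
      by (rule sum_mono) (use c0 in auto)
    ultimately show ?thesis using wsum by simp
  qed
  show ?thesis using w0 src edg unfolding K_def by blast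
qed



lemma common_subseq:
  fixes x :: "'a \<Rightarrow> nat \<Rightarrow> real"
  assumes "finite K" "\<forall>T\<in>K. bounded (range (x T))"
  shows "\<exists>r. strict_mono r \<and> (\<forall>T\<in>K. \<exists>l. (\<lambda>n. x T (r n)) \<longlonglongrightarrow> l)"
  using assms
proof (induction K rule: finite_induct)
  case empty
  show ?case by (intro exI[of _ id]) (auto simp: strict_mono_def)
next
  case (insert a F)
  then obtain r where r: "strict_mono r" "\<forall>T\<in>F. \<exists>l. (\<lambda>n. x T (r n)) \<longlonglongrightarrow> l" by auto
  have "range (\<lambda>n. x a (r n)) \<subseteq> range (x a)" by auto
  moreover have "bounded (range (x a))" using insert by auto
  ultimately have "bounded (range (\<lambda>n. x a (r n)))" using bounded_subset by blast
  then obtain l r' where r': "strict_mono r'" "((\<lambda>n. x a (r n)) \<circ> r') \<longlonglongrightarrow> l"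
    using bounded_imp_convergent_subsequence by blast
  have "strict_mono (r \<circ> r')" using r(1) r'(1) by (rule strict_mono_o)
  moreover have "\<forall>T\<in>insert a F. \<exists>l. (\<lambda>n. x T ((r \<circ> r') n)) \<longlonglongrightarrow> l"
  proof
    fix T assume "T \<in> insert a F"
    then show "\<exists>l. (\<lambda>n. x T ((r \<circ> r') n)) \<longlonglongrightarrow> l"
    proof
      assume "T = a" then show ?thesis using r'(2) by (auto simp: o_def)
    next
      assume "T \<in> F"
      then obtain l' where "(\<lambda>n. x T (r n)) \<longlonglongrightarrow> l'" using r(2) by blast
      from LIMSEQ_subseq_LIMSEQ[OF this r'(1)] show ?thesis by (auto simp: o_def)
    qed
  qed
  ultimately show ?case by blast
qed

lemma sum_filter_lt:
  fixes f :: "nat \<Rightarrow> real"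
  shows "(\<Sum>i\<in>{i. i < n \<and> P i}. f i) = (\<Sum>i<n. if P i then f i else 0)"
proof -
  have "{i. i < n \<and> P i} = {i\<in>{..<n}. P i}" by auto
  then show ?thesis using sum.inter_filter[of "{..<n}" f P] by simp
qed

lemma forward:
  fixes S :: "'s set" and E :: "'e set"
  assumes finS: "finite S" and finE: "finite E"
    and za: "zero_achievable_routing V E tailf headf S Orig D lam om"
  shows "(lam, om) \<in> CL S E (proj ` {h. almost_atomic_on (ground S E) h \<and> C_T S E tailf headf Orig h
                                  \<and> C_D S E headf Orig D h \<and> C_I S E h})"
proof -
  obtain n :: nat and T :: "nat \<Rightarrow> ('s + 'e) set" and c :: "nat \<Rightarrow> real" where
    R0: "\<forall>i<n. routing_subnetwork S E tailf headf Orig (T i) \<and> c i \<ge> 0" and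
    R1: "\<forall>e\<in>E. om e \<ge> (\<Sum>i\<in>{i. i < n \<and> Inr e \<in> T i}. c i)" and
    R2: "\<forall>i<n. \<forall>u\<in>D (nu (T i)). \<exists>f\<in>T i. u \<in> headX Orig headf f" and
    R3: "\<forall>s\<in>S. lam s = (\<Sum>i\<in>{i. i < n \<and> nu (T i) = s}. c i)"
    using za unfolding zero_achievable_routing_def by blast
  have rs: "routing_subnetwork S E tailf headf Orig (T i)" if "i < n" for i using R0 that by blast
  have sub: "T i \<subseteq> ground S E" if "i < n" for i using rs[OF that] by (simp add: routing_subnetwork_def)
  define h where "h \<beta> = (\<Sum>i<n. c i * ind (T i) \<beta>)" for \<beta>
  have aa: "almost_atomic_on (ground S E) h"
    unfolding almost_atomic_on_def
  proof (intro exI conjI)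
    show "\<forall>i<n. 0 \<le> c i \<and> atomic_on (ground S E) (ind (T i))"
      using R0 sub unfolding atomic_on_def ind_def by blast
    show "\<forall>\<beta>\<subseteq>ground S E. h \<beta> = (\<Sum>i<n. c i * ind (T i) \<beta>)" by (simp add: h_def)
  qed
  have cdz: "cond_diff h A B = 0" if "\<And>i. i < n \<Longrightarrow> ind (T i) (A \<union> B) = ind (T i) B" for A B
  proof -
    have "h (A \<union> B) = h B" unfolding h_def by (rule sum.cong) (use that in auto)
    then show ?thesis by (simp add: cond_diff_def)
  qed
  have CT: "C_T S E tailf headf Orig h"
    unfolding C_T_def
  proof
    fix e assume e: "e \<in> E"
    show "cond_diff h {Inr e} (in_edge S E Orig tailf headf e) = 0"
    proof (rule cdz)
      fix i assume i: "i < n"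
      show "ind (T i) ({Inr e} \<union> in_edge S E Orig tailf headf e) = ind (T i) (in_edge S E Orig tailf headf e)"
      proof (cases "Inr e \<in> T i")
        case True
        then have "in_edge S E Orig tailf headf e \<inter> T i \<noteq> {}"
          using rs[OF i] e unfolding routing_subnetwork_def by blast
        then show ?thesis unfolding ind_def by auto
      next
        case False then show ?thesis unfolding ind_def by auto
      qed
    qed
  qed
  have CD: "C_D S E headf Orig D h"
    unfolding C_D_def
  proof (intro ballI)
    fix s u assume s: "s \<in> S" and u: "u \<in> D s"
    show "cond_diff h {Inl s} (in_node S E Orig headf u) = 0"
    proof (rule cdz)
      fix i assume i: "i < n"
      show "ind (T i) ({Inl s} \<union> in_node S E Orig headf u) = ind (T i) (in_node S E Orig headf u)"
      proof (cases "Inl s \<in> T i")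
        case True
        then have "s = nu (T i)" using nu_props(3)[OF rs[OF i]] by blast
        then obtain f where f: "f \<in> T i" "u \<in> headX Orig headf f" using R2 i u by blast
        then have "f \<in> in_node S E Orig headf u" using sub[OF i] unfolding in_node_def by blast
        with f have "in_node S E Orig headf u \<inter> T i \<noteq> {}" by blast
        then show ?thesis unfolding ind_def by auto
      next
        case False then show ?thesis unfolding ind_def by auto
      qed
    qed
  qed
  have memiff: "Inl s \<in> T i \<longleftrightarrow> nu (T i) = s" if "i < n" for i s
    using nu_props[OF rs[OF that]] by blast
  have CI: "C_I S E h"
    unfolding C_I_def
  proof -
    have "h (Inl ` S) = (\<Sum>i<n. c i)"
      unfolding h_def
    proof (rule sum.cong[OF refl])
      fix i assume "i \<in> {..<n}"
      then have "Inl (nu (T i)) \<in> T i" "nu (T i) \<in> S" using nu_props[OF rs] by auto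
      then have "Inl ` S \<inter> T i \<noteq> {}" by blast
      then show "c i * ind (T i) (Inl ` S) = c i" by (simp add: ind_def)
    qed
    moreover have "(\<Sum>s\<in>S. h {Inl s}) = (\<Sum>i<n. c i)"
    proof -
      have "(\<Sum>s\<in>S. h {Inl s}) = (\<Sum>i<n. c i * (\<Sum>s\<in>S. ind (T i) {Inl s}))"
        unfolding h_def by (subst sum.swap) (simp add: sum_distrib_left)
      also have "\<dots> = (\<Sum>i<n. c i)"
      proof (rule sum.cong[OF refl])
        fix i assume i: "i \<in> {..<n}"
        have "(\<Sum>s\<in>S. ind (T i) {Inl s}) = (\<Sum>s\<in>S. if nu (T i) = s then 1 else 0)"
          using memiff i by (intro sum.cong) auto
        also have "\<dots> = 1" using finS nu_props(1)[OF rs] i by simp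
        finally show "c i * (\<Sum>s\<in>S. ind (T i) {Inl s}) = c i" by simp
      qed
      finally show ?thesis .
    qed
    ultimately show "h (Inl ` S) = (\<Sum>s\<in>S. h {Inl s})" by simp
  qed
  have hs: "h {Inl s} = lam s" if "s \<in> S" for s
  proof -
    have "h {Inl s} = (\<Sum>i<n. if nu (T i) = s then c i else 0)"
      unfolding h_def by (rule sum.cong) (use memiff in auto)
    then show ?thesis using R3 that by (simp add: sum_filter_lt)
  qed
  have he: "h {Inr e} \<le> om e" if "e \<in> E" for e
  proof -
    have "h {Inr e} = (\<Sum>i<n. if Inr e \<in> T i then c i else 0)"
      unfolding h_def by (rule sum.cong) auto
    then show ?thesis using R1 that by (simp add: sum_filter_lt)
  qed
  let ?H = "{h. almost_atomic_on (ground S E) h \<and> C_T S E tailf headf Orig h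
                                  \<and> C_D S E headf Orig D h \<and> C_I S E h}"
  have "proj h \<in> proj ` ?H" using aa CT CD CI by blast
  then show ?thesis
    unfolding CL_def
  proof (clarsimp, intro exI[of _ "\<lambda>n. proj h"] exI[of _ "\<lambda>n. 1"] conjI)
    show "\<forall>e\<in>E. \<exists>L. (\<lambda>n. 1 * snd (proj h) e) \<longlonglongrightarrow> L \<and> L \<le> om e"
      using he by (auto simp: proj_def)
    show "\<forall>s\<in>S. \<exists>L. (\<lambda>n. 1 * fst (proj h) s) \<longlonglongrightarrow> L \<and> lam s \<le> L"
      using hs by (auto simp: proj_def)
  qed auto
qed



lemma reverse:
  fixes S :: "'s set" and E :: "'e set" and lam :: "'s \<Rightarrow> real" and om :: "'e \<Rightarrow> real"
  assumes finS: "finite S" and finE: "finite E" and lam0: "\<forall>s\<in>S. lam s \<ge> 0"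
    and cl: "(lam, om) \<in> CL S E (proj ` {h. almost_atomic_on (ground S E) h \<and> C_T S E tailf headf Orig h
                                  \<and> C_D S E headf Orig D h \<and> C_I S E h})"
  shows "zero_achievable_routing V E tailf headf S Orig D lam om"
proof -
  let ?H = "{h. almost_atomic_on (ground S E) h \<and> C_T S E tailf headf Orig h
                                  \<and> C_D S E headf Orig D h \<and> C_I S E h}"
  define K where "K = Kset S E tailf headf Orig D"
  have finK: "finite K" unfolding K_def using Kset_finite finS finE by blast
  obtain seq :: "nat \<Rightarrow> ('s \<Rightarrow> real) \<times> ('e \<Rightarrow> real)" and c :: "nat \<Rightarrow> real" where
    sc: "\<forall>n. seq n \<in> proj ` ?H \<and> c n > 0" and
    le: "\<forall>e\<in>E. \<exists>L. (\<lambda>n. c n * snd (seq n) e) \<longlonglongrightarrow> L \<and> L \<le> om e" and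
    ls: "\<forall>s\<in>S. \<exists>L. (\<lambda>n. c n * fst (seq n) s) \<longlonglongrightarrow> L \<and> L \<ge> lam s"
    using cl unfolding CL_def by blast
  have "\<forall>n. \<exists>h. h \<in> ?H \<and> seq n = proj h" using sc by blast
  from choice[OF this] obtain hh where hh: "\<forall>n. hh n \<in> ?H \<and> seq n = proj (hh n)" by blast
  have "\<forall>n. \<exists>w. (\<forall>T. w T \<ge> 0) \<and>
     (\<forall>s\<in>S. hh n {Inl s} = (\<Sum>T\<in>{T\<in>K. nu T = s}. w T)) \<and>
     (\<forall>e\<in>E. hh n {Inr e} \<ge> (\<Sum>T\<in>{T\<in>K. Inr e \<in> T}. w T))"
  proof
    fix n
    have "hh n \<in> ?H" using hh by blast
    then show "\<exists>w. (\<forall>T. w T \<ge> 0) \<and>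
     (\<forall>s\<in>S. hh n {Inl s} = (\<Sum>T\<in>{T\<in>K. nu T = s}. w T)) \<and>
     (\<forall>e\<in>E. hh n {Inr e} \<ge> (\<Sum>T\<in>{T\<in>K. Inr e \<in> T}. w T))"
      unfolding K_def using L1[OF finS finE] by blast
  qed
  from choice[OF this] obtain w where w: "\<forall>n. (\<forall>T. w n T \<ge> 0) \<and>
     (\<forall>s\<in>S. hh n {Inl s} = (\<Sum>T\<in>{T\<in>K. nu T = s}. w n T)) \<and>
     (\<forall>e\<in>E. hh n {Inr e} \<ge> (\<Sum>T\<in>{T\<in>K. Inr e \<in> T}. w n T))" by blast
  have "\<forall>e. \<exists>L. e \<in> E \<longrightarrow> (\<lambda>n. c n * snd (seq n) e) \<longlonglongrightarrow> L \<and> L \<le> om e" using le by blast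
  from choice[OF this] obtain Le where Le: "\<And>e. e \<in> E \<Longrightarrow> (\<lambda>n. c n * snd (seq n) e) \<longlonglongrightarrow> Le e \<and> Le e \<le> om e"
    by blast
  have "\<forall>s. \<exists>L. s \<in> S \<longrightarrow> (\<lambda>n. c n * fst (seq n) s) \<longlonglongrightarrow> L \<and> L \<ge> lam s" using ls by blast
  from choice[OF this] obtain Ls where Ls: "\<And>s. s \<in> S \<Longrightarrow> (\<lambda>n. c n * fst (seq n) s) \<longlonglongrightarrow> Ls s \<and> Ls s \<ge> lam s"
    by blast
  have fstseq: "fst (seq n) s = hh n {Inl s}" for n s using hh by (simp add: proj_def)
  have sndseq: "snd (seq n) e = hh n {Inr e}" for n e using hh by (simp add: proj_def)
  have G: "Inl (nu T) \<in> T" "nu T \<in> S" if "T \<in> K" for T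
  proof -
    have "routing_subnetwork S E tailf headf Orig T" using that unfolding K_def Kset_def by blast
    then show "Inl (nu T) \<in> T" "nu T \<in> S" using nu_props by blast+
  qed
  define x where "x T n = c n * w n T" for T n
  have x0: "x T n \<ge> 0" for T n using w sc unfolding x_def by (simp add: less_imp_le)
  have srcsum: "(\<Sum>T\<in>{T\<in>K. nu T = s}. x T n) = c n * fst (seq n) s" if "s \<in> S" for s n
    using w that unfolding x_def fstseq by (simp add: sum_distrib_left)
  have edgsum: "(\<Sum>T\<in>{T\<in>K. Inr e \<in> T}. x T n) \<le> c n * snd (seq n) e" if "e \<in> E" for e n
  proof -
    have "(\<Sum>T\<in>{T\<in>K. Inr e \<in> T}. x T n) = c n * (\<Sum>T\<in>{T\<in>K. Inr e \<in> T}. w n T)"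
      unfolding x_def by (simp add: sum_distrib_left)
    also have "\<dots> \<le> c n * hh n {Inr e}"
      using w that sc by (intro mult_left_mono) (auto simp: less_imp_le)
    finally show ?thesis by (simp add: sndseq)
  qed
  have bnd: "\<forall>T\<in>K. bounded (range (x T))"
  proof
    fix T assume T: "T \<in> K"
    have "convergent (\<lambda>n. c n * fst (seq n) (nu T))" using Ls[OF G(2)[OF T]] by (auto simp: convergent_def)
    then have "Bseq (\<lambda>n. c n * fst (seq n) (nu T))" by (rule convergent_imp_Bseq)
    then obtain B where B: "\<forall>n. norm (c n * fst (seq n) (nu T)) \<le> B" by (auto simp: Bseq_def)
    have "x T n \<le> B" for n
    proof -
      have "x T n \<le> (\<Sum>T'\<in>{T'\<in>K. nu T' = nu T}. x T' n)"
        by (rule member_le_sum) (use T finK x0 in auto)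
      also have "\<dots> = c n * fst (seq n) (nu T)" using srcsum G(2)[OF T] by blast
      also have "\<dots> \<le> B" using B by (metis abs_le_D1 real_norm_def)
      finally show ?thesis .
    qed
    then have "range (x T) \<subseteq> {0..B}" using x0 by auto
    then show "bounded (range (x T))" using bounded_closed_interval bounded_subset by blast
  qed
  obtain r where r: "strict_mono r" "\<forall>T\<in>K. \<exists>l. (\<lambda>n. x T (r n)) \<longlonglongrightarrow> l"
    using common_subseq[OF finK bnd] by blast
  have "\<forall>T. \<exists>l. T \<in> K \<longrightarrow> (\<lambda>n. x T (r n)) \<longlonglongrightarrow> l" using r(2) by blast
  from choice[OF this] obtain y where y: "\<And>T. T \<in> K \<Longrightarrow> (\<lambda>n. x T (r n)) \<longlonglongrightarrow> y T" by blast
  have y0: "y T \<ge> 0" if "T \<in> K" for T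
    by (rule LIMSEQ_le_const[OF y[OF that]]) (use x0 in auto)
  have ysrc: "(\<Sum>T\<in>{T\<in>K. nu T = s}. y T) = Ls s" if s: "s \<in> S" for s
  proof -
    have a: "(\<lambda>n. \<Sum>T\<in>{T\<in>K. nu T = s}. x T (r n)) \<longlonglongrightarrow> (\<Sum>T\<in>{T\<in>K. nu T = s}. y T)"
      by (rule tendsto_sum) (use y in auto)
    have "((\<lambda>n. c n * fst (seq n) s) \<circ> r) \<longlonglongrightarrow> Ls s"
      using LIMSEQ_subseq_LIMSEQ[OF conjunct1[OF Ls[OF s]] r(1)] .
    then have b: "(\<lambda>n. \<Sum>T\<in>{T\<in>K. nu T = s}. x T (r n)) \<longlonglongrightarrow> Ls s"
      using srcsum[OF s] by (simp add: o_def)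
    show ?thesis using LIMSEQ_unique[OF a b] .
  qed
  have yedg: "(\<Sum>T\<in>{T\<in>K. Inr e \<in> T}. y T) \<le> Le e" if e: "e \<in> E" for e
  proof -
    have a: "(\<lambda>n. \<Sum>T\<in>{T\<in>K. Inr e \<in> T}. x T (r n)) \<longlonglongrightarrow> (\<Sum>T\<in>{T\<in>K. Inr e \<in> T}. y T)"
      by (rule tendsto_sum) (use y in auto)
    have "((\<lambda>n. c n * snd (seq n) e) \<circ> r) \<longlonglongrightarrow> Le e"
      using LIMSEQ_subseq_LIMSEQ[OF conjunct1[OF Le[OF e]] r(1)] .
    then have b: "(\<lambda>n. c (r n) * snd (seq (r n)) e) \<longlonglongrightarrow> Le e" by (simp add: o_def)
    show ?thesis by (rule LIMSEQ_le[OF a b]) (use edgsum[OF e] in auto)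
  qed
  define d where "d T = y T * (lam (nu T) / Ls (nu T))" for T
  have fac: "0 \<le> lam s / Ls s \<and> lam s / Ls s \<le> 1" if "s \<in> S" for s
  proof -
    have "0 \<le> lam s" "lam s \<le> Ls s" using lam0 Ls that by auto
    then show ?thesis by (cases "Ls s = 0") (auto simp: divide_le_eq_1)
  qed
  have d0: "d T \<ge> 0" if "T \<in> K" for T
    using y0[OF that] fac[OF G(2)[OF that]] unfolding d_def by (intro mult_nonneg_nonneg) auto
  have dy: "d T \<le> y T" if "T \<in> K" for T
  proof -
    have "y T * (lam (nu T) / Ls (nu T)) \<le> y T * 1"
      using y0[OF that] fac[OF G(2)[OF that]] by (intro mult_left_mono) auto
    then show ?thesis unfolding d_def by simp
  qed
  have dsrc: "(\<Sum>T\<in>{T\<in>K. nu T = s}. d T) = lam s" if s: "s \<in> S" for s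
  proof -
    have "(\<Sum>T\<in>{T\<in>K. nu T = s}. d T) = (\<Sum>T\<in>{T\<in>K. nu T = s}. y T * (lam s / Ls s))"
      unfolding d_def by (rule sum.cong) auto
    also have "\<dots> = (\<Sum>T\<in>{T\<in>K. nu T = s}. y T) * (lam s / Ls s)" by (rule sum_distrib_right[symmetric])
    also have "\<dots> = Ls s * (lam s / Ls s)" using ysrc[OF s] by simp
    also have "\<dots> = lam s"
    proof (cases "Ls s = 0")
      case True
      then have "lam s = 0" using lam0 Ls s by force
      then show ?thesis by simp
    qed simp
    finally show ?thesis .
  qed
  have dedg: "(\<Sum>T\<in>{T\<in>K. Inr e \<in> T}. d T) \<le> om e" if e: "e \<in> E" for e
  proof -
    have "(\<Sum>T\<in>{T\<in>K. Inr e \<in> T}. d T) \<le> (\<Sum>T\<in>{T\<in>K. Inr e \<in> T}. y T)"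
      by (rule sum_mono) (use dy in auto)
    also have "\<dots> \<le> Le e" by (rule yedg[OF e])
    also have "\<dots> \<le> om e" using Le[OF e] by blast
    finally show ?thesis .
  qed
  obtain g where g: "bij_betw g {0..<card K} K" using ex_bij_betw_nat_finite[OF finK] by blast
  have gK: "g i \<in> K" if "i < card K" for i
    using g that unfolding bij_betw_def by auto
  show ?thesis
    unfolding zero_achievable_routing_def
  proof (intro exI[of _ "card K"] exI[of _ g] exI[of _ "\<lambda>i. d (g i)"] conjI)
    show "\<forall>i<card K. routing_subnetwork S E tailf headf Orig (g i) \<and> 0 \<le> d (g i)"
      using gK d0 unfolding K_def Kset_def by blast
    show "\<forall>e\<in>E. (\<Sum>i\<in>{i. i < card K \<and> Inr e \<in> g i}. d (g i)) \<le> om e"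
    proof
      fix e assume "e \<in> E"
      then show "(\<Sum>i\<in>{i. i < card K \<and> Inr e \<in> g i}. d (g i)) \<le> om e"
        using dedg reindex_bij[OF g, where P="\<lambda>T. Inr e \<in> T" and f=d] by simp
    qed
    show "\<forall>i<card K. \<forall>u\<in>D (nu (g i)). \<exists>f\<in>g i. u \<in> headX Orig headf f"
      using gK unfolding K_def Kset_def by blast
    show "\<forall>s\<in>S. lam s = (\<Sum>i\<in>{i. i < card K \<and> nu (g i) = s}. d (g i))"
    proof
      fix s assume "s \<in> S"
      then show "lam s = (\<Sum>i\<in>{i. i < card K \<and> nu (g i) = s}. d (g i))"
        using dsrc reindex_bij[OF g, where P="\<lambda>T. nu T = s" and f=d] by simp
    qed
  qed
qed


theorem theorem5:
  fixes V :: "'v set" and E :: "'e set" and tailf :: "'e \<Rightarrow> 'v" and headf :: "'e \<Rightarrow> 'v set"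
    and S :: "'s set" and Orig :: "'s \<Rightarrow> 'v set" and D :: "'s \<Rightarrow> 'v set"
    and lam :: "'s \<Rightarrow> real" and om :: "'e \<Rightarrow> real"
  assumes "network_problem V E tailf headf S Orig D"
    and "\<forall>s\<in>S. lam s \<ge> 0" and "\<forall>e\<in>E. om e \<ge> 0"
  shows "zero_achievable_routing V E tailf headf S Orig D lam om \<longleftrightarrow>
    (lam, om) \<in> CL S E (proj ` {h. almost_atomic_on (ground S E) h \<and> C_T S E tailf headf Orig h
                                  \<and> C_D S E headf Orig D h \<and> C_I S E h})"
proof -
  have finS: "finite S" and finE: "finite E" using assms(1) by (auto simp: network_problem_def)
  show ?thesis
    using forward[OF finS finE] reverse[OF finS finE assms(2)] by blast
qed

end
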